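(* Let $\alpha_1,\alpha_2,\alpha_3\in\mathbb{Z}$ with $\alpha_1\ge\alpha_2\ge0\ge\alpha_3$, and put $b=-\alpha_1-\alpha_2-\alpha_3$, $c=\alpha_1\alpha_2+\alpha_1\alpha_3+\alpha_2\alpha_3$, $c_1=-\alpha_1\alpha_2\alpha_3$. Let $a_1>a_2>0$ be real numbers and set $$P=a_1^3a_2^2+a_1^2a_2^3+(a_1^2a_2+a_1a_2^2)bc_1+(a_1^2+a_2^2)c_1^2+2a_1^2a_2^2c.$$ Then the two inequalities $$P\le0\quad\text{and}\quad P^2-(a_1-a_2)^2\bigl((a_1+a_2)c_1^2-a_1^2a_2^2+a_1a_2bc_1\bigr)^2\ge0$$ hold simultaneously if and only if $-\alpha_2\alpha_3\le a_2<a_1\le-\alpha_1\alpha_3$. *)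

theory Defs
  imports Complex_Main
begin

end

theory Submission
  imports Defs
begin

lemma sign_lem:
  fixes z s t r :: real
  assumes "z > 0" "r \<ge> 0" "s \<le> t"
  shows "(z - s) * (z - t) * (z + r) \<le> 0 \<longleftrightarrow> s \<le> z \<and> z \<le> t"
proof -
  have zr: "z + r > 0" using assms by simp
  have "(z - s) * (z - t) * (z + r) \<le> 0 \<longleftrightarrow> (z - s) * (z - t) \<le> 0"
    using zr by (simp add: mult_le_0_iff)
  also have "\<dots> \<longleftrightarrow> s \<le> z \<and> z \<le> t"
    using assms(3) by (auto simp: mult_le_0_iff)
  finally show ?thesis .
qed

lemma comb_lem:
  fixes x y G1 G2 :: real
  assumes "x > 0" "y > 0"
  shows "(y^2 * G1 + x^2 * G2 \<le> 0 \<and> 4 * x^2 * y^2 * (G1 * G2) \<ge> 0)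
         \<longleftrightarrow> G1 \<le> 0 \<and> G2 \<le> 0"
proof -
  have pos: "4 * x^2 * y^2 > 0" "x^2 > 0" "y^2 > 0" using assms by auto
  have q: "4 * x^2 * y^2 * (G1 * G2) \<ge> 0 \<longleftrightarrow> G1 * G2 \<ge> 0"
    using pos(1) by (simp add: zero_le_mult_iff)
  show ?thesis
  proof
    assume h: "y^2 * G1 + x^2 * G2 \<le> 0 \<and> 4 * x^2 * y^2 * (G1 * G2) \<ge> 0"
    hence p: "G1 * G2 \<ge> 0" using q by simp
    show "G1 \<le> 0 \<and> G2 \<le> 0"
    proof (rule ccontr)
      assume "\<not> (G1 \<le> 0 \<and> G2 \<le> 0)"
      hence "G1 \<ge> 0 \<and> G2 \<ge> 0 \<and> (G1 > 0 \<or> G2 > 0)" using p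
        by (auto simp: zero_le_mult_iff)
      hence "y^2 * G1 + x^2 * G2 > 0" using pos
        by (smt (verit) mult_nonneg_nonneg mult_pos_pos)
      thus False using h by simp
    qed
  next
    assume "G1 \<le> 0 \<and> G2 \<le> 0"
    thus "y^2 * G1 + x^2 * G2 \<le> 0 \<and> 4 * x^2 * y^2 * (G1 * G2) \<ge> 0"
      using pos q by (smt (verit) mult_nonneg_nonpos zero_le_mult_iff)
  qed
qed

theorem lemma2:
  fixes \<alpha>1 \<alpha>2 \<alpha>3 :: int and a1 a2 :: real
  assumes "\<alpha>1 \<ge> \<alpha>2" and "\<alpha>2 \<ge> 0" and "0 \<ge> \<alpha>3"
    and "a1 > a2" and "a2 > 0"
  shows "let b = real_of_int (- \<alpha>1 - \<alpha>2 - \<alpha>3);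
             c = real_of_int (\<alpha>1 * \<alpha>2 + \<alpha>1 * \<alpha>3 + \<alpha>2 * \<alpha>3);
             c1 = real_of_int (- \<alpha>1 * \<alpha>2 * \<alpha>3);
             P = a1^3 * a2^2 + a1^2 * a2^3 + (a1^2 * a2 + a1 * a2^2) * b * c1
                 + (a1^2 + a2^2) * c1^2 + 2 * a1^2 * a2^2 * c
         in (P \<le> 0 \<and>
             P^2 - (a1 - a2)^2 * ((a1 + a2) * c1^2 - a1^2 * a2^2 + a1 * a2 * b * c1)^2 \<ge> 0)
            \<longleftrightarrow> (real_of_int (- \<alpha>2 * \<alpha>3) \<le> a2 \<and> a2 < a1 \<and> a1 \<le> real_of_int (- \<alpha>1 * \<alpha>3))"
proof -
  define p q w where "p = real_of_int \<alpha>1" "q = real_of_int \<alpha>2" "w = real_of_int \<alpha>3"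
  define s t r where "s = - q * w" "t = - p * w" "r = p * q"
  define G where "G = (\<lambda>z::real. (z - s) * (z - t) * (z + r))"
  have pq: "p \<ge> q" "q \<ge> 0" "w \<le> 0" using assms unfolding p_q_w_def by auto
  have r0: "r \<ge> 0" using pq unfolding s_t_r_def by simp
  have st: "s \<le> t" using pq unfolding s_t_r_def by (simp add: mult_right_mono_neg)
  have P: "a1^3 * a2^2 + a1^2 * a2^3 + (a1^2 * a2 + a1 * a2^2) * (- p - q - w) * (- p * q * w)
                 + (a1^2 + a2^2) * (- p * q * w)^2 + 2 * a1^2 * a2^2 * (p * q + p * w + q * w)
           = a2^2 * G a1 + a1^2 * G a2"
    unfolding G_def s_t_r_def by (simp add: algebra_simps power2_eq_square power3_eq_cube)
  have Q: "(a2^2 * G a1 + a1^2 * G a2)^2 - (a1 - a2)^2 * ((a1 + a2) * (- p * q * w)^2 - a1^2 * a2^2 + a1 * a2 * (- p - q - w) * (- p * q * w))^2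
           = 4 * a1^2 * a2^2 * (G a1 * G a2)"
    unfolding G_def s_t_r_def by (simp add: algebra_simps power2_eq_square power3_eq_cube)
  have G1: "G a1 \<le> 0 \<longleftrightarrow> s \<le> a1 \<and> a1 \<le> t"
    unfolding G_def using sign_lem[OF _ r0 st, of a1] assms by simp
  have G2: "G a2 \<le> 0 \<longleftrightarrow> s \<le> a2 \<and> a2 \<le> t"
    unfolding G_def using sign_lem[OF _ r0 st, of a2] assms by simp
  have C: "(a2^2 * G a1 + a1^2 * G a2 \<le> 0 \<and> 4 * a1^2 * a2^2 * (G a1 * G a2) \<ge> 0)
         \<longleftrightarrow> G a1 \<le> 0 \<and> G a2 \<le> 0"
    using comb_lem assms by simp
  have eqs: "real_of_int (- \<alpha>1 - \<alpha>2 - \<alpha>3) = - p - q - w"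
     "real_of_int (\<alpha>1 * \<alpha>2 + \<alpha>1 * \<alpha>3 + \<alpha>2 * \<alpha>3) = p * q + p * w + q * w"
     "real_of_int (- \<alpha>1 * \<alpha>2 * \<alpha>3) = - p * q * w"
     "real_of_int (- \<alpha>2 * \<alpha>3) = s" "real_of_int (- \<alpha>1 * \<alpha>3) = t"
    unfolding p_q_w_def s_t_r_def by simp_all
  show ?thesis
    unfolding Let_def eqs P Q C G1 G2 using assms by auto
qed

end
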